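(* Let $t\neq|$ be a tree of $\mathcal{A}$ such that $\Delta(t)=|\otimes t+t\otimes|$. Then $t$ is a corolla, i.e. its only internal vertex is the root vertex.
   Context: Trees: planar rooted trees in which every internal vertex has at least two children; the root vertex hangs from a trunk edge; leaves are edges without upper vertex; $|$ is the tree with one leaf and no internal vertex. $\mathcal{A}$ is the vector space over a field $\mathbb K$ with basis all such trees, with its tridendriform products (Loday–Ronco free tridendriform algebra on $Y=|\vee|$; $x_0\vee\cdots\vee x_k$ grafts trees on a new root; for $x=x^{(0)}\vee\cdots\vee x^{(k)}$, $y=y^{(0)}\vee\cdots\vee y^{(l)}$: $x\prec y=x^{(0)}\vee\cdots\vee x^{(k-1)}\vee(x^{(k)}*y)$, $x\cdot y=x^{(0)}\vee\cdots\vee x^{(k-1)}\vee(x^{(k)}*y^{(0)})\vee y^{(1)}\vee\cdots\vee y^{(l)}$, $x\succ y=(x*y^{(0)})\vee y^{(1)}\vee\cdots\vee y^{(l)}$, $*=\prec+\cdot+\succ$, $|*z=z*|=z$). $\Delta$ is the coproduct $\Delta(|)=|\otimes|$, $\Delta(t)=\sum_{c}G^c(t)\otimes P^c(t)$ over admissible cuts $c$ of $t$: an internal edge joins two internal vertices; a cut is a nonempty set of internal edges, plus the empty cut and the total cut (below the root); admissible means every root-to-leaf path meets at most one chosen edge. Removing the edges gives $P^c(t)$ (the component containing the root) and trees $G^c_1(t),\dots,G^c_m(t)$ from left to right, $G^c(t)=G^c_1(t)*\cdots*G^c_m(t)$; empty cut: $P^c=t$, $G^c=|$; total cut: $P^c=|$,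 $G^c=t$. *)

theory Defs
  imports Main "HOL-Library.Multiset"
begin

text \<open>Leaf is the tree with one leaf and no internal vertex.
  Node [x0,...,xk] is the grafting x0 \<or> ... \<or> xk on a new root vertex.\<close>
datatype tree = Leaf | Node "tree list"

fun valid :: "tree \<Rightarrow> bool" where
  "valid Leaf = True"
| "valid (Node ts) = (length ts \<ge> 2 \<and> (\<forall>c\<in>set ts. valid c))"

definition corolla :: "tree \<Rightarrow> bool" where
  "corolla t = (\<exists>ts. t = Node ts \<and> (\<forall>c\<in>set ts. c = Leaf))"

lemma size_mem_lt: "x \<in> set xs \<Longrightarrow> size x < size (Node xs)"
  by (induction xs) auto

text \<open>Results are linear combinations with natural
  coefficients, represented as multisets of trees (mapped into the field by of_nat).
  star = prec + dot + succ, with Leaf as unit.\<close>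
function star :: "tree \<Rightarrow> tree \<Rightarrow> tree multiset" where
  "star Leaf y = {#y#}"
| "star (Node xs) Leaf = {#Node xs#}"
| "star (Node xs) (Node ys) =
     (if xs = [] \<or> ys = [] then {#} else
        image_mset (\<lambda>z. Node (butlast xs @ [z])) (star (last xs) (Node ys))
      + image_mset (\<lambda>z. Node (butlast xs @ [z] @ tl ys)) (star (last xs) (hd ys))
      + image_mset (\<lambda>z. Node (z # tl ys)) (star (Node xs) (hd ys)))"
  by pat_completeness auto
termination
proof (relation "measure (\<lambda>(x, y). size x + size y)")
  fix xs ys :: "tree list"
  assume h: "\<not> (xs = [] \<or> ys = [])"
  have a: "size (last xs) < size (Node xs)" using h by (intro size_mem_lt last_in_set) simp
  have b: "size (hd ys) < size (Node ys)" using h by (intro size_mem_lt hd_in_set) simp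
  show "((last xs, Node ys), Node xs, Node ys) \<in> measure (\<lambda>(x, y). size x + size y)" using a by simp
  show "((last xs, hd ys), Node xs, Node ys) \<in> measure (\<lambda>(x, y). size x + size y)" using a b by simp
  show "((Node xs, hd ys), Node xs, Node ys) \<in> measure (\<lambda>(x, y). size x + size y)" using b by simp
qed simp

definition mstar :: "tree multiset \<Rightarrow> tree multiset \<Rightarrow> tree multiset" where
  "mstar A B = sum_mset (image_mset (\<lambda>a. sum_mset (image_mset (star a) B)) A)"

fun gprod :: "tree list \<Rightarrow> tree multiset" where
  "gprod [] = {#Leaf#}"
| "gprod (g # gs) = mstar {#g#} (gprod gs)"

text \<open>Admissible cuts of a tree other than the total cut: each yields the list of
  pruned trees G_1..G_m (left to right) and the root part P. A cut edge becomes a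
  leaf of P and the trunk of the pruned subtree. The empty cut is included.\<close>
fun rcuts :: "tree \<Rightarrow> (tree list \<times> tree) list" where
  "rcuts Leaf = [([], Leaf)]"
| "rcuts (Node ts) =
     map (\<lambda>ch. (concat (map fst ch), Node (map snd ch)))
       (product_lists (map (\<lambda>c. (if c = Leaf then [] else [([c], Leaf)]) @ rcuts c) ts))"

definition cuts :: "tree \<Rightarrow> (tree list \<times> tree) list" where
  "cuts t = ([t], Leaf) # rcuts t"

definition Delta_ms :: "tree \<Rightarrow> (tree \<times> tree) multiset" where
  "Delta_ms t = (if t = Leaf then {#(Leaf, Leaf)#}
     else sum_list (map (\<lambda>(gs, p). image_mset (\<lambda>g. (g, p)) (gprod gs)) (cuts t)))"

text \<open>Elements of A \<otimes> A over the field 'k, as coefficient functions on basis pairs.\<close>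
definition Delta :: "tree \<Rightarrow> tree \<times> tree \<Rightarrow> 'k::semiring_1" where
  "Delta t = (\<lambda>x. of_nat (count (Delta_ms t) x))"

definition tens :: "tree \<Rightarrow> tree \<Rightarrow> tree \<times> tree \<Rightarrow> 'k::semiring_1" where
  "tens a b = (\<lambda>x. if x = (a, b) then 1 else 0)"

end

theory Submission
  imports Defs
begin

lemma concat_map_nil[simp]: "concat (map (\<lambda>x. []) xs) = []"
  by (induction xs) auto

lemma distinct_map_product_lists:
  assumes "\<forall>xs\<in>set xss. distinct (map f xs)"
  shows "distinct (map (map f) (product_lists xss))"
  using assms
proof (induction xss)
  case Nil then show ?case by simp
next
  case (Cons xs xss)
  have IH: "distinct (map (map f) (product_lists xss))" using Cons by simp
  have dx: "distinct (map f xs)" using Cons.prems by simp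
  from dx show ?case
  proof (induction xs)
    case Nil then show ?case by simp
  next
    case (Cons x xs')
    have d1: "distinct (map (map f) (map ((#) x) (product_lists xss)))"
      using IH by (simp add: distinct_map inj_on_def)
    have disj: "set (map (map f) (map ((#) x) (product_lists xss))) \<inter>
        set (map (map f) (concat (map (\<lambda>y. map ((#) y) (product_lists xss)) xs'))) = {}"
      using Cons.prems by auto
    show ?case using d1 disj Cons by (simp add: map_concat)
  qed
qed

lemma rcuts_props:
  "distinct (map snd (rcuts t)) \<and> (\<forall>x\<in>set (rcuts t). (snd x = Leaf) = (t = Leaf))"
proof (induction t rule: rcuts.induct)
  case 1 then show ?case by simp
next
  case (2 ts)
  define L where "L = (\<lambda>c. (if c = Leaf then [] else [([c], Leaf)]) @ rcuts c)"
  have "\<forall>xs\<in>set (map L ts). distinct (map snd xs)"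
  proof
    fix xs assume "xs \<in> set (map L ts)"
    then obtain c where c: "c \<in> set ts" "xs = L c" by auto
    show "distinct (map snd xs)"
    proof (cases "c = Leaf")
      case True then show ?thesis using c by (simp add: L_def)
    next
      case False
      have "distinct (map snd (rcuts c))" "\<forall>x\<in>set (rcuts c). snd x \<noteq> Leaf"
        using 2 c False by auto
      then show ?thesis using c False by (auto simp: L_def)
    qed
  qed
  then have "distinct (map (map snd) (product_lists (map L ts)))"
    by (rule distinct_map_product_lists)
  then have "distinct (map Node (map (map snd) (product_lists (map L ts))))"
    by (simp add: distinct_map inj_on_def)
  then show ?case by (simp add: L_def[symmetric] o_def)
qed

lemma empty_cut: "([], t) \<in> set (rcuts t)"
proof (induction t rule: rcuts.induct)
  case 1 then show ?case by simp
next
  case (2 ts)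
  define L where "L = (\<lambda>c. (if c = Leaf then [] else [([c], Leaf)]) @ rcuts c)"
  have "map (\<lambda>c. ([], c)) ts \<in> set (product_lists (map L ts))"
    unfolding product_lists_set using 2
    by (auto simp: L_def list_all2_conv_all_nth)
  then have "(concat (map fst (map (\<lambda>c. ([], c)) ts)), Node (map snd (map (\<lambda>c. ([]::tree list, c)) ts)))
      \<in> set (rcuts (Node ts))"
    by (simp add: L_def[symmetric] del: map_map)
  moreover have "concat (map (\<lambda>x. []::tree list) ts) = []" by (induction ts) auto
  ultimately show ?case by (simp add: o_def)
qed

lemma one_cut:
  assumes "c \<noteq> Leaf"
  shows "([c], Node (as @ Leaf # bs)) \<in> set (rcuts (Node (as @ c # bs)))"
proof -
  define L where "L = (\<lambda>c. (if c = Leaf then [] else [([c], Leaf)]) @ rcuts c)"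
  define ch where "ch = map (\<lambda>c. ([]::tree list, c)) as @ ([c], Leaf) # map (\<lambda>c. ([], c)) bs"
  have A: "list_all2 (\<lambda>x ys. x \<in> set ys) (map (\<lambda>c. ([]::tree list, c)) xs) (map L xs)" for xs
    by (auto simp: L_def list_all2_conv_all_nth empty_cut)
  have B: "list_all2 (\<lambda>x ys. x \<in> set ys) (([c], Leaf) # map (\<lambda>c. ([]::tree list, c)) bs) (map L (c # bs))"
    using A[of bs] assms by (simp add: L_def)
  have "ch \<in> set (product_lists (map L (as @ c # bs)))"
    unfolding product_lists_set ch_def using A[of as] B
    by (simp del: list.map add: list_all2_appendI)
  then have "(concat (map fst ch), Node (map snd ch)) \<in> set (rcuts (Node (as @ c # bs)))"
    by (simp add: L_def[symmetric] del: map_map)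
  moreover have "concat (map fst ch) = [c]" "map snd ch = as @ Leaf # bs"
    by (simp_all add: ch_def o_def)
  ultimately show ?thesis by simp
qed

lemma count_sum_list_map:
  "count (sum_list (map h xs)) x = sum_list (map (\<lambda>y. count (h y) x) xs)"
  by (induction xs) auto

theorem mainTheorem7:
  fixes t :: tree
  assumes "valid t" and "t \<noteq> Leaf"
    and "(Delta t :: tree \<times> tree \<Rightarrow> 'k::field) = (\<lambda>x. tens Leaf t x + tens t Leaf x)"
  shows "corolla t"
proof (rule ccontr)
  assume nc: "\<not> corolla t"
  obtain ts where t: "t = Node ts" using assms(2) by (cases t) auto
  obtain c where c: "c \<in> set ts" "c \<noteq> Leaf" using nc t by (auto simp: corolla_def)
  obtain as bs where ts: "ts = as @ c # bs" using c split_list by metis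
  define P where "P = Node (as @ Leaf # bs)"
  have mem: "([c], P) \<in> set (rcuts t)" using one_cut[OF c(2)] t ts P_def by simp
  have dis: "distinct (map snd (rcuts t))" using rcuts_props by blast
  then have dl: "distinct (rcuts t)" by (simp add: distinct_map)
  define h :: "tree list \<times> tree \<Rightarrow> (tree \<times> tree) multiset" where "h = (\<lambda>(gs, p). image_mset (\<lambda>g. (g, p)) (gprod gs))"
  define f where "f = (\<lambda>y. count (h y) (c, P))"
  have gc: "mstar {#c#} {#Leaf#} = {#c#}" using c(2) by (cases c) (auto simp: mstar_def)
  have f1: "f ([c], P) = 1" by (simp add: f_def h_def gc)
  have f0: "f y = 0" if "y \<in> set (rcuts t) - {([c], P)}" for y
  proof -
    obtain gs p where y: "y = (gs, p)" by fastforce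
    have "p \<noteq> P"
    proof
      assume "p = P"
      then have "y = ([c], P)"
        using dis mem that y by (metis (no_types, lifting) Diff_iff distinct_map inj_onD snd_conv)
      then show False using that by simp
    qed
    then show ?thesis by (auto simp: f_def h_def y count_image_mset)
  qed
  have "sum_list (map f (rcuts t)) = sum f (set (rcuts t))"
    using dl by (simp add: sum_list_distinct_conv_sum_set)
  also have "\<dots> = f ([c], P) + sum f (set (rcuts t) - {([c], P)})"
    using mem by (simp add: sum.remove)
  also have "\<dots> = 1" using f1 f0 by simp
  finally have s1: "sum_list (map f (rcuts t)) = 1" .
  have fT: "f ([t], Leaf) = 0" by (auto simp: f_def h_def count_image_mset P_def)
  have "count (Delta_ms t) (c, P) = 1"
    using assms(2) s1 fT
    by (simp add: Delta_ms_def cuts_def count_sum_list_map f_def h_def[symmetric])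
  then have "(Delta t :: tree \<times> tree \<Rightarrow> 'k) (c, P) = 1" by (simp add: Delta_def)
  moreover have "(\<lambda>x. tens Leaf t x + tens t Leaf x) (c, P) = (0::'k)"
    using c(2) by (auto simp: tens_def P_def)
  ultimately show False using assms(3) by simp
qed

end
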